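(* In Setting (S), for every $0\le i\le \ell$, $|V(G_i)|\ge n\left(1-\frac{i}{2\log n}\right)$.
   Context: Median graph: every triple $x,y,z$ of vertices has $|I(x,y)\cap I(y,z)\cap I(z,x)|=1$, $I(u,v)=\{x:d(u,x)+d(x,v)=d(u,v)\}$. $\Theta$-classes: classes of the reflexive–transitive closure of the relation on edges "opposite edges of a 4-cycle"; deleting a $\Theta$-class $E_i$ of a median graph leaves two components with vertex sets (halfspaces) $H_i',H_i''$. For $u\ne v$, the ladder set $L_{u,v}$ is the set of $\Theta$-classes separating $u$ from $v$ that contain an edge incident to $u$. Setting (S): $(G,\omega)$ is a median graph with $n\ge 3$ vertices and weights $\omega:V(G)\to\mathbb{N}$ such that every $\Theta$-class satisfies $\min\{|H_i'|,|H_i''|\}<n/(2\log n)$ ($\log$ natural); $H_i'$ denotes the smaller (minority) and $H_i''$ the larger halfspace. $v_0$ is the unique vertex in all majority halfspaces; $u_{\max}$ maximizes $d(v_0,u)+\omega(u)$ (chosen $=v_0$ if possible) and $u_{\max}\ne v_0$ is assumed. $L(G)=L_{v_0,u_{\max}}=\{E_1,\dots,E_\ell\}$. Large sets: $G_0=G$, $G_{i+1}=G[V(G_i)\setminus H'_{i+1}]$. *)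

theory Defs
  imports Complex_Main
begin

definition simple_graph :: "'a set \<Rightarrow> ('a \<Rightarrow> 'a \<Rightarrow> bool) \<Rightarrow> bool" where
  "simple_graph V adj \<longleftrightarrow> finite V \<and> (\<forall>x y. adj x y \<longrightarrow> adj y x) \<and> (\<forall>x. \<not> adj x x)
     \<and> (\<forall>x y. adj x y \<longrightarrow> x \<in> V \<and> y \<in> V)"

definition walk_in :: "('a \<Rightarrow> 'a \<Rightarrow> bool) \<Rightarrow> 'a list \<Rightarrow> bool" where
  "walk_in R xs \<longleftrightarrow> xs \<noteq> [] \<and> (\<forall>i. Suc i < length xs \<longrightarrow> R (xs ! i) (xs ! Suc i))"

definition connected_graph :: "'a set \<Rightarrow> ('a \<Rightarrow> 'a \<Rightarrow> bool) \<Rightarrow> bool" where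
  "connected_graph V adj \<longleftrightarrow> (\<forall>x\<in>V. \<forall>y\<in>V. \<exists>xs. walk_in adj xs \<and> hd xs = x \<and> last xs = y)"

definition gdist :: "('a \<Rightarrow> 'a \<Rightarrow> bool) \<Rightarrow> 'a \<Rightarrow> 'a \<Rightarrow> nat" where
  "gdist adj x y = (LEAST k. \<exists>xs. walk_in adj xs \<and> hd xs = x \<and> last xs = y \<and> length xs = Suc k)"

definition interval :: "'a set \<Rightarrow> ('a \<Rightarrow> 'a \<Rightarrow> bool) \<Rightarrow> 'a \<Rightarrow> 'a \<Rightarrow> 'a set" where
  "interval V adj u v = {x \<in> V. gdist adj u x + gdist adj x v = gdist adj u v}"

definition median_graph :: "'a set \<Rightarrow> ('a \<Rightarrow> 'a \<Rightarrow> bool) \<Rightarrow> bool" where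
  "median_graph V adj \<longleftrightarrow> simple_graph V adj \<and> connected_graph V adj \<and>
     (\<forall>x\<in>V. \<forall>y\<in>V. \<forall>z\<in>V.
        card (interval V adj x y \<inter> interval V adj y z \<inter> interval V adj z x) = 1)"

definition edges :: "('a \<Rightarrow> 'a \<Rightarrow> bool) \<Rightarrow> 'a set set" where
  "edges adj = {{a, b} | a b. adj a b}"

definition opposite :: "('a \<Rightarrow> 'a \<Rightarrow> bool) \<Rightarrow> 'a set \<Rightarrow> 'a set \<Rightarrow> bool" where
  "opposite adj e f \<longleftrightarrow> (\<exists>a b c d. e = {a, b} \<and> f = {c, d} \<and> distinct [a, b, c, d] \<and>
      adj a b \<and> adj b d \<and> adj d c \<and> adj c a)"

definition theta :: "('a \<Rightarrow> 'a \<Rightarrow> bool) \<Rightarrow> 'a set \<Rightarrow> 'a set \<Rightarrow> bool" where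
  "theta adj e f \<longleftrightarrow> e \<in> edges adj \<and> f \<in> edges adj \<and> (e, f) \<in> {(e, f). opposite adj e f}\<^sup>*"

definition theta_classes :: "('a \<Rightarrow> 'a \<Rightarrow> bool) \<Rightarrow> 'a set set set" where
  "theta_classes adj = {{f. theta adj e f} | e. e \<in> edges adj}"

definition comp_del :: "'a set \<Rightarrow> ('a \<Rightarrow> 'a \<Rightarrow> bool) \<Rightarrow> 'a set set \<Rightarrow> 'a \<Rightarrow> 'a set" where
  "comp_del V adj C a = {x \<in> V. \<exists>xs. walk_in (\<lambda>u v. adj u v \<and> {u, v} \<notin> C) xs \<and> hd xs = a \<and> last xs = x}"

text \<open>The minority (smaller) and majority (larger) halfspaces of a Theta-class C:
  the two components of G - C, namely those of the endpoints of any edge of C.\<close>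

definition minority :: "'a set \<Rightarrow> ('a \<Rightarrow> 'a \<Rightarrow> bool) \<Rightarrow> 'a set set \<Rightarrow> 'a set" where
  "minority V adj C = (SOME H. \<exists>a b. {a, b} \<in> C \<and> adj a b \<and> H = comp_del V adj C a \<and>
       card H < card (comp_del V adj C b))"

definition majority :: "'a set \<Rightarrow> ('a \<Rightarrow> 'a \<Rightarrow> bool) \<Rightarrow> 'a set set \<Rightarrow> 'a set" where
  "majority V adj C = (SOME H. \<exists>a b. {a, b} \<in> C \<and> adj a b \<and> H = comp_del V adj C b \<and>
       card (comp_del V adj C a) < card H)"

definition ladder_set :: "'a set \<Rightarrow> ('a \<Rightarrow> 'a \<Rightarrow> bool) \<Rightarrow> 'a \<Rightarrow> 'a \<Rightarrow> 'a set set set" where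
  "ladder_set V adj u v = {C \<in> theta_classes adj. v \<notin> comp_del V adj C u \<and>
       (\<exists>w. adj u w \<and> {u, w} \<in> C)}"

text \<open>Large sets: V(G_0) = V, V(G_{i+1}) = V(G_i) - H'_{i+1}, for an enumeration Es = [E_1,...,E_l].\<close>

fun large_set :: "'a set \<Rightarrow> ('a \<Rightarrow> 'a \<Rightarrow> bool) \<Rightarrow> 'a set set list \<Rightarrow> nat \<Rightarrow> 'a set" where
  "large_set V adj Es 0 = V"
| "large_set V adj Es (Suc i) = large_set V adj Es i - minority V adj (Es ! i)"

end

theory Submission imports Defs begin
lemma arith_sq:
  fixes ua ub va vb xa xb ya yb :: nat
  assumes u: "ua \<noteq> ub" "ua \<le> ub + 1" "ub \<le> ua + 1"
   and v: "va \<noteq> vb" "va \<le> vb + 1" "vb \<le> va + 1"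
   and x: "xa \<noteq> xb" "xa \<le> xb + 1" "xb \<le> xa + 1"
   and y: "ya \<noteq> yb" "ya \<le> yb + 1" "yb \<le> ya + 1"
   and uva: "ua \<noteq> va" "ua \<le> va + 1" "va \<le> ua + 1"
   and uvb: "ub \<noteq> vb" "ub \<le> vb + 1" "vb \<le> ub + 1"
   and uxa: "ua \<noteq> xa" "ua \<le> xa + 1" "xa \<le> ua + 1"
   and uxb: "ub \<noteq> xb" "ub \<le> xb + 1" "xb \<le> ub + 1"
   and vya: "va \<noteq> ya" "va \<le> ya + 1" "ya \<le> va + 1"
   and vyb: "vb \<noteq> yb" "vb \<le> yb + 1" "yb \<le> vb + 1"
   and xya: "xa \<noteq> ya" "xa \<le> ya + 1" "ya \<le> xa + 1"
   and xyb: "xb \<noteq> yb" "xb \<le> yb + 1" "yb \<le> xb + 1"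
   and A: "\<not> (xa = ua + 1 \<and> va = ua + 1 \<and> ya = ua)"
   and B: "\<not> (yb = vb + 1 \<and> ub = vb + 1 \<and> xb = vb)"
   and W: "ua < ub" "vb < va"
  shows "xa < xb \<and> yb < ya"
proof -
  have 1: "ub = ua + 1" using u W by linarith
  have 2: "vb = ua" using v uva uvb W 1 by linarith
  have 3: "va = ua + 1" using v W 2 by linarith
  have 4: "xa = ua + 1 \<or> xa + 1 = ua" using uxa by linarith
  have 5: "ya = ua + 2 \<or> ya = ua" using vya 3 by linarith
  have 6: "xb = ua \<or> xb = ua + 2" using uxb 1 by linarith
  have 7: "yb + 1 = ua \<or> yb = ua + 1" using vyb 2 by linarith
  from 4 5 6 7 show ?thesis using 1 2 3 x y xya xyb A B by (elim disjE) linarith+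
qed

lemma walk_Cons: "walk_in R (x#xs) \<longleftrightarrow> (xs = [] \<or> (R x (hd xs) \<and> walk_in R xs))"
  unfolding walk_in_def
  apply (cases xs)
   apply simp
  apply (auto simp: nth_Cons split: nat.splits)
  done

lemma walk_single[simp]: "walk_in R [x]"
  by (simp add: walk_in_def)

lemma walk_append: "walk_in R xs \<Longrightarrow> walk_in R ys \<Longrightarrow> R (last xs) (hd ys) \<Longrightarrow> walk_in R (xs @ ys)"
proof (induction xs)
  case Nil thus ?case by (simp add: walk_in_def)
next
  case (Cons x xs)
  show ?case
  proof (cases "xs = []")
    case True thus ?thesis using Cons.prems by (simp add: walk_Cons)
  next
    case False
    thus ?thesis using Cons by (auto simp: walk_Cons)
  qed
qed

lemma walk_rev: "(\<And>x y. R x y \<Longrightarrow> R y x) \<Longrightarrow> walk_in R xs \<Longrightarrow> walk_in R (rev xs)"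
proof (induction xs)
  case Nil thus ?case by (simp add: walk_in_def)
next
  case (Cons x xs)
  show ?case
  proof (cases "xs = []")
    case True thus ?thesis by simp
  next
    case False
    then have "walk_in R (rev xs)" "R (hd xs) x" using Cons by (auto simp: walk_Cons)
    thus ?thesis using False by (auto intro!: walk_append simp: last_rev)
  qed
qed

lemma walk_concat:
  assumes "walk_in R xs" "walk_in R ys" "last xs = hd ys"
  shows "walk_in R (xs @ tl ys) \<and> hd (xs @ tl ys) = hd xs \<and> last (xs @ tl ys) = last ys
         \<and> length (xs @ tl ys) = length xs + length ys - 1"
proof -
  have ne: "xs \<noteq> []" "ys \<noteq> []" using assms by (auto simp: walk_in_def)
  then obtain y ys' where ys: "ys = y # ys'" by (cases ys) auto
  show ?thesis
  proof (cases "ys' = []")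
    case True thus ?thesis using assms ys ne by auto
  next
    case False
    then have "R y (hd ys')" "walk_in R ys'" using assms(2) ys by (auto simp: walk_Cons)
    then have "walk_in R (xs @ ys')" using assms ys by (auto intro!: walk_append)
    thus ?thesis using ys ne False by auto
  qed
qed

context
  fixes V :: "'a set" and adj :: "'a \<Rightarrow> 'a \<Rightarrow> bool"
  assumes med: "median_graph V adj"
begin

abbreviation "d \<equiv> gdist adj"

lemma fin: "finite V" and symm: "adj x y \<Longrightarrow> adj y x" and irr: "\<not> adj x x"
  and inV: "adj x y \<Longrightarrow> x \<in> V" "adj x y \<Longrightarrow> y \<in> V"
  using med unfolding median_graph_def simple_graph_def by blast+

lemma d_ex: assumes "x \<in> V" "y \<in> V"
  shows "\<exists>xs. walk_in adj xs \<and> hd xs = x \<and> last xs = y \<and> length xs = Suc (d x y)"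
proof -
  obtain xs where xs: "walk_in adj xs" "hd xs = x" "last xs = y"
    using med assms unfolding median_graph_def connected_graph_def by blast
  then have "length xs = Suc (length xs - 1)" by (cases xs) (auto simp: walk_in_def)
  then have "\<exists>k. \<exists>xs. walk_in adj xs \<and> hd xs = x \<and> last xs = y \<and> length xs = Suc k" using xs by blast
  from LeastI_ex[OF this] show ?thesis unfolding gdist_def .
qed

lemma d_le: assumes "walk_in adj xs" "hd xs = x" "last xs = y"
  shows "d x y \<le> length xs - 1"
proof -
  have "length xs = Suc (length xs - 1)" using assms by (cases xs) (auto simp: walk_in_def)
  then show ?thesis unfolding gdist_def using assms by (intro Least_le) blast
qed

lemma d_refl[simp]: "d x x = 0"
  using d_le[of "[x]" x x] by simp

lemma d_zero: assumes "x \<in> V" "y \<in> V" "d x y = 0" shows "x = y"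
proof -
  obtain xs where "walk_in adj xs" "hd xs = x" "last xs = y" "length xs = 1"
    using d_ex[OF assms(1,2)] assms(3) by auto
  then show ?thesis by (cases xs) auto
qed

lemma d_sym: assumes "x \<in> V" "y \<in> V" shows "d x y = d y x"
proof -
  have "d y x \<le> d x y" if xy: "x \<in> V" "y \<in> V" for x y
  proof -
    obtain xs where xs: "walk_in adj xs" "hd xs = x" "last xs = y" "length xs = Suc (d x y)"
      using d_ex[OF xy] by auto
    have "walk_in adj (rev xs)" using xs(1) walk_rev[of adj] symm by blast
    moreover have "xs \<noteq> []" using xs by auto
    ultimately show ?thesis using d_le[of "rev xs" y x] xs by (simp add: hd_rev last_rev)
  qed
  thus ?thesis using assms by (meson antisym)
qed

lemma d_tri: assumes "x \<in> V" "y \<in> V" "z \<in> V" shows "d x z \<le> d x y + d y z"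
proof -
  obtain xs where xs: "walk_in adj xs" "hd xs = x" "last xs = y" "length xs = Suc (d x y)"
    using d_ex assms by blast
  obtain ys where ys: "walk_in adj ys" "hd ys = y" "last ys = z" "length ys = Suc (d y z)"
    using d_ex assms by blast
  from walk_concat[OF xs(1) ys(1)] xs ys
  have "walk_in adj (xs @ tl ys)" "hd (xs @ tl ys) = x" "last (xs @ tl ys) = z"
     "length (xs @ tl ys) = Suc (d x y) + Suc (d y z) - 1" by auto
  from d_le[OF this(1-3)] this(4) show ?thesis by simp
qed

lemma d_adj: assumes "adj x y" shows "d x y = 1"
proof -
  have "d x y \<le> 1" using d_le[of "[x,y]" x y] assms by (simp add: walk_Cons)
  moreover have "d x y \<noteq> 0" using d_zero[of x y] inV[OF assms] irr assms by auto
  ultimately show ?thesis by simp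
qed

lemma d_one: assumes "x \<in> V" "y \<in> V" "d x y = 1" shows "adj x y"
proof -
  obtain xs where xs: "walk_in adj xs" "hd xs = x" "last xs = y" "length xs = 2"
    using d_ex[OF assms(1,2)] assms(3) by auto
  then obtain p q where "xs = [p,q]"
    by (cases xs; cases "tl xs") auto
  thus ?thesis using xs by (auto simp: walk_Cons)
qed

lemma d_step: assumes "x \<in> V" "y \<in> V" "d x y = Suc k"
  shows "\<exists>x'. adj x x' \<and> d x' y \<le> k"
proof -
  obtain xs where xs: "walk_in adj xs" "hd xs = x" "last xs = y" "length xs = Suc (Suc k)"
    using d_ex[OF assms(1,2)] assms(3) by auto
  then obtain ys where ys: "xs = x # ys" "ys \<noteq> []" by (cases xs) force+
  then have "adj x (hd ys)" "walk_in adj ys" using xs(1) by (auto simp: walk_Cons)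
  moreover have "d (hd ys) y \<le> k" using d_le[OF \<open>walk_in adj ys\<close>, of "hd ys" y] xs ys by auto
  ultimately show ?thesis by blast
qed

end

context
  fixes V :: "'a set" and adj :: "'a \<Rightarrow> 'a \<Rightarrow> bool"
  assumes med: "median_graph V adj"
begin

lemma med_card: "x \<in> V \<Longrightarrow> y \<in> V \<Longrightarrow> z \<in> V \<Longrightarrow>
   card (interval V adj x y \<inter> interval V adj y z \<inter> interval V adj z x) = 1"
  using med unfolding median_graph_def by blast

lemma med2:
  assumes "x \<in> V" "y \<in> V" "z \<in> V" "m1 \<in> V" "m2 \<in> V"
    "d adj x m1 + d adj m1 y = d adj x y" "d adj y m1 + d adj m1 z = d adj y z" "d adj z m1 + d adj m1 x = d adj z x"
    "d adj x m2 + d adj m2 y = d adj x y" "d adj y m2 + d adj m2 z = d adj y z" "d adj z m2 + d adj m2 x = d adj z x"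
  shows "m1 = m2"
proof -
  have "m1 \<in> interval V adj x y \<inter> interval V adj y z \<inter> interval V adj z x"
       "m2 \<in> interval V adj x y \<inter> interval V adj y z \<inter> interval V adj z x"
    using assms unfolding interval_def by auto
  with med_card[OF assms(1-3)] show ?thesis by (metis card_1_singletonE singletonD)
qed

lemma med_ex: assumes "x \<in> V" "y \<in> V" "z \<in> V"
  shows "\<exists>m\<in>V. d adj x m + d adj m y = d adj x y \<and> d adj y m + d adj m z = d adj y z \<and> d adj z m + d adj m x = d adj z x"
proof -
  from med_card[OF assms] obtain m where "m \<in> interval V adj x y \<inter> interval V adj y z \<inter> interval V adj z x"
    by (metis card_1_singletonE singletonI)
  thus ?thesis unfolding interval_def by auto
qed

lemma int_adj: assumes "adj x y" "m \<in> V" "d adj x m + d adj m y = 1" shows "m = x \<or> m = y"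
proof -
  have "d adj x m = 0 \<or> d adj m y = 0" using assms(3) by arith
  thus ?thesis using d_zero[OF med] inV[OF med assms(1)] assms(2) by metis
qed

lemma adj_ne: assumes "adj x y" "z \<in> V" shows "d adj x z \<noteq> d adj y z"
proof
  assume eq: "d adj x z = d adj y z"
  have V: "x \<in> V" "y \<in> V" using inV[OF med assms(1)] by auto
  have 1: "d adj x y = 1" "d adj y x = 1" using d_adj[OF med] assms symm[OF med] by auto
  obtain m where m: "m \<in> V" "d adj x m + d adj m y = 1" "d adj y m + d adj m z = d adj y z"
     "d adj z m + d adj m x = d adj z x" using med_ex[OF V assms(2)] 1 by auto
  from int_adj[OF assms(1) m(1,2)] show False
  proof
    assume "m = x" thus False using m 1 eq by simp
  next
    assume "m = y" thus False using m 1 eq d_sym[OF med V(1) assms(2)] d_sym[OF med V(2) assms(2)] by simp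
  qed
qed

lemma tri_free: assumes "adj x y" "adj y z" "adj x z" shows False
proof -
  have V: "x \<in> V" "y \<in> V" "z \<in> V" using inV[OF med] assms by auto
  have 1: "d adj x y = 1" "d adj y z = 1" "d adj x z = 1" "d adj y x = 1" "d adj z y = 1" "d adj z x = 1"
    using d_adj[OF med] assms symm[OF med] by auto
  obtain m where m: "m \<in> V" "d adj x m + d adj m y = 1" "d adj y m + d adj m z = d adj y z"
     "d adj z m + d adj m x = d adj z x" using med_ex[OF V] 1 by auto
  from int_adj[OF assms(1) m(1,2)] show False
  proof
    assume "m = x" thus False using m 1 by simp
  next
    assume "m = y" thus False using m 1 by simp
  qed
qed

lemma dist2: assumes "adj x y" "adj y z" "x \<noteq> z" shows "d adj x z = 2" "d adj z x = 2"
proof -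
  have V: "x \<in> V" "y \<in> V" "z \<in> V" using inV[OF med] assms by auto
  have "\<not> adj x z" using tri_free assms by blast
  moreover have "d adj x z \<le> 2" using d_tri[OF med V] d_adj[OF med] assms by simp
  moreover have "d adj x z \<noteq> 0" using d_zero[OF med V(1,3)] assms by auto
  moreover have "d adj x z \<noteq> 1" using d_one[OF med V(1,3)] calculation(1) by blast
  ultimately show "d adj x z = 2" by arith
  thus "d adj z x = 2" using d_sym[OF med V(1,3)] by simp
qed

lemma square:
  assumes ab: "adj a b" and uv: "adj u v" "adj u u'" "adj v v'" "adj u' v'"
    and dist: "distinct [u, v, u', v']"
    and W: "d adj u a < d adj u b" "d adj v b < d adj v a"
  shows "d adj u' a < d adj u' b \<and> d adj v' b < d adj v' a"
proof -
  have V: "a \<in> V" "b \<in> V" "u \<in> V" "v \<in> V" "u' \<in> V" "v' \<in> V" using inV[OF med] assms by blast+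
  note ds = d_sym[OF med]
  note dt = d_tri[OF med]
  have dab: "d adj a b = 1" "d adj b a = 1" using d_adj[OF med] ab symm[OF med] by auto
  have e: "\<And>x y. adj x y \<Longrightarrow> d adj x y = 1 \<and> d adj y x = 1" using d_adj[OF med] symm[OF med] by blast
  have ab_facts: "\<And>x. x \<in> V \<Longrightarrow> d adj x a \<noteq> d adj x b \<and> d adj x a \<le> d adj x b + 1 \<and> d adj x b \<le> d adj x a + 1"
  proof -
    fix x assume x: "x \<in> V"
    have "d adj x a \<noteq> d adj x b" using adj_ne[OF ab x] ds x V by metis
    moreover have "d adj x a \<le> d adj x b + 1" using dt[OF x V(2) V(1)] dab by simp
    moreover have "d adj x b \<le> d adj x a + 1" using dt[OF x V(1) V(2)] dab by simp
    ultimately show "?thesis x" by blast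
  qed
  have edge_facts: "\<And>x y z. adj x y \<Longrightarrow> z \<in> V \<Longrightarrow> d adj x z \<noteq> d adj y z \<and> d adj x z \<le> d adj y z + 1 \<and> d adj y z \<le> d adj x z + 1"
  proof -
    fix x y z assume xy: "adj x y" and z: "z \<in> V"
    have xyV: "x \<in> V" "y \<in> V" using inV[OF med xy] by auto
    show "?thesis x y z" using adj_ne[OF xy z] dt[OF xyV(1) xyV(2) z] dt[OF xyV(2) xyV(1) z] e[OF xy] by simp
  qed
  have sy: "d adj a u = d adj u a" "d adj a v = d adj v a" "d adj a v' = d adj v' a"
     "d adj b u = d adj u b" "d adj b v = d adj v b" "d adj b u' = d adj u' b"
    using ds V by metis+
  have e1: "d adj v u = 1" "d adj u u' = 1" "d adj u' u = 1" "d adj u v = 1" "d adj v v' = 1" "d adj v' v = 1"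
     "d adj u' v' = 1" "d adj v' u' = 1"
    using e assms by blast+
  have d2: "d adj v u' = 2" "d adj u v' = 2"
  proof -
    show "d adj v u' = 2" using dist2(1)[of v u u'] symm[OF med] uv dist by auto
    show "d adj u v' = 2" using dist2(1)[of u v v'] uv dist by auto
  qed
  have A: "\<not> (d adj u' a = d adj u a + 1 \<and> d adj v a = d adj u a + 1 \<and> d adj v' a = d adj u a)"
  proof
    assume h: "d adj u' a = d adj u a + 1 \<and> d adj v a = d adj u a + 1 \<and> d adj v' a = d adj u a"
    have "u = v'" apply (rule med2[of v u' a u v']) using V h sy e1 d2 by simp_all
    thus False using dist by simp
  qed
  have B: "\<not> (d adj v' b = d adj v b + 1 \<and> d adj u b = d adj v b + 1 \<and> d adj u' b = d adj v b)"
  proof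
    assume h: "d adj v' b = d adj v b + 1 \<and> d adj u b = d adj v b + 1 \<and> d adj u' b = d adj v b"
    have "v = u'" apply (rule med2[of u v' b v u']) using V h sy e1 d2 by simp_all
    thus False using dist by simp
  qed
  show ?thesis
    apply (rule arith_sq[of "d adj u a" "d adj u b" "d adj v a" "d adj v b" "d adj u' a" "d adj u' b" "d adj v' a" "d adj v' b"])
    using ab_facts[OF V(3)] ab_facts[OF V(4)] ab_facts[OF V(5)] ab_facts[OF V(6)]
      edge_facts[OF uv(1) V(1)] edge_facts[OF uv(1) V(2)]
      edge_facts[OF uv(2) V(1)] edge_facts[OF uv(2) V(2)]
      edge_facts[OF uv(3) V(1)] edge_facts[OF uv(3) V(2)]
      edge_facts[OF uv(4) V(1)] edge_facts[OF uv(4) V(2)] A B W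
    by blast+
qed

end

context
  fixes V :: "'a set" and adj :: "'a \<Rightarrow> 'a \<Rightarrow> bool"
  assumes med: "median_graph V adj"
begin

lemma cross_class:
  assumes ab: "adj a b" and e: "e = {a, b}" and th: "(e, f) \<in> {(e, f). opposite adj e f}\<^sup>*"
  shows "\<exists>u v. f = {u, v} \<and> adj u v \<and> d adj u a < d adj u b \<and> d adj v b < d adj v a"
  using th
proof (induction rule: rtrancl_induct)
  case base
  have "d adj a b = 1" "d adj b a = 1" using d_adj[OF med] ab symm[OF med] by auto
  then have "e = {a, b} \<and> adj a b \<and> d adj a a < d adj a b \<and> d adj b b < d adj b a" using e ab d_refl[OF med] by simp
  then show ?case by blast
next
  case (step f g)
  from step.IH obtain u v where uv: "f = {u, v}" "adj u v" "d adj u a < d adj u b" "d adj v b < d adj v a"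
    by blast
  from step.hyps(2) obtain p q r s where o: "f = {p, q}" "g = {r, s}" "distinct [p, q, r, s]"
      "adj p q" "adj q s" "adj s r" "adj r p" unfolding opposite_def by blast
  note sy = symm[OF med]
  have "(u = p \<and> v = q) \<or> (u = q \<and> v = p)" using uv(1) o(1) o(3) by (auto simp: doubleton_eq_iff)
  then show ?case
  proof
    assume h: "u = p \<and> v = q"
    have "d adj r a < d adj r b \<and> d adj s b < d adj s a"
      using square[OF med ab, of u v r s] h o uv sy by auto
    thus ?case using o sy by blast
  next
    assume h: "u = q \<and> v = p"
    have "d adj s a < d adj s b \<and> d adj r b < d adj r a"
      using square[OF med ab, of u v s r] h o uv sy by auto
    thus ?case using o sy by (metis insert_commute)
  qed
qed

lemma comp_ext:
  assumes "x' \<in> comp_del V adj C a" "adj x' x" "{x', x} \<notin> C"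
  shows "x \<in> comp_del V adj C a"
proof -
  obtain xs where xs: "walk_in (\<lambda>u v. adj u v \<and> {u, v} \<notin> C) xs" "hd xs = a" "last xs = x'"
    using assms(1) unfolding comp_del_def by blast
  have "walk_in (\<lambda>u v. adj u v \<and> {u, v} \<notin> C) (xs @ [x])"
    using xs assms by (intro walk_append) auto
  moreover have "xs \<noteq> []" using xs(1) by (simp add: walk_in_def)
  ultimately show ?thesis unfolding comp_del_def using xs inV[OF med assms(2)]
    by (intro CollectI conjI exI[of _ "xs @ [x]"]) auto
qed

lemma cover:
  assumes ab: "adj a b" and e: "e = {a, b}"
  shows "x \<in> V \<Longrightarrow> d adj x a < d adj x b \<Longrightarrow> x \<in> comp_del V adj {f. theta adj e f} a"
proof (induction "d adj x a" arbitrary: x)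
  case 0
  have aV: "a \<in> V" using inV[OF med ab] by simp
  have "x = a" using d_zero[OF med 0(2) aV] 0(1) by simp
  then show ?case unfolding comp_del_def using aV by (auto intro!: exI[of _ "[a]"])
next
  case (Suc k x)
  have V: "a \<in> V" "b \<in> V" using inV[OF med ab] by auto
  obtain x' where x': "adj x x'" "d adj x' a \<le> k" using d_step[OF med Suc(3) V(1) Suc(2)[symmetric]] by blast
  have x'V: "x' \<in> V" using inV[OF med x'(1)] by simp
  have dxx: "d adj x x' = 1" "d adj x' x = 1" using d_adj[OF med] x'(1) symm[OF med] by auto
  have "d adj x a \<le> d adj x x' + d adj x' a" using d_tri[OF med Suc(3) x'V V(1)] .
  then have ka: "d adj x' a = k" using x'(2) Suc(2) dxx by simp
  have "d adj x b \<le> d adj x x' + d adj x' b" using d_tri[OF med Suc(3) x'V V(2)] .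
  then have kb: "d adj x' a < d adj x' b" using ka Suc(2) Suc(4) dxx by simp
  have IH: "x' \<in> comp_del V adj {f. theta adj e f} a" using Suc(1)[of x'] ka x'V kb by simp
  have "{x', x} \<notin> {f. theta adj e f}"
  proof
    assume "{x', x} \<in> {f. theta adj e f}"
    then have "(e, {x', x}) \<in> {(e, f). opposite adj e f}\<^sup>*" unfolding theta_def by simp
    from cross_class[OF ab e this] obtain u v where uv: "{x', x} = {u, v}"
      "d adj u a < d adj u b" "d adj v b < d adj v a" by blast
    then have "(x' = u \<and> x = v) \<or> (x' = v \<and> x = u)" by (auto simp: doubleton_eq_iff)
    then show False using uv kb Suc(4) by auto
  qed
  then show ?case using comp_ext[OF IH] x'(1) symm[OF med] by blast
qed

lemma halves:
  assumes C: "C \<in> theta_classes adj"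
  shows "\<exists>a b. {a, b} \<in> C \<and> adj a b \<and> V \<subseteq> comp_del V adj C a \<union> comp_del V adj C b"
proof -
  obtain e where e: "e \<in> edges adj" "C = {f. theta adj e f}" using C unfolding theta_classes_def by blast
  then obtain a b where ab: "e = {a, b}" "adj a b" unfolding edges_def by blast
  have V: "a \<in> V" "b \<in> V" using inV[OF med ab(2)] by auto
  have "e \<in> C" using e unfolding theta_def by simp
  moreover have "V \<subseteq> comp_del V adj C a \<union> comp_del V adj C b"
  proof
    fix x assume x: "x \<in> V"
    have "d adj x a \<noteq> d adj x b" using adj_ne[OF med ab(2) x] d_sym[OF med x] V by metis
    then have "d adj x a < d adj x b \<or> d adj x b < d adj x a" by arith
    then show "x \<in> comp_del V adj C a \<union> comp_del V adj C b"
    proof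
      assume "d adj x a < d adj x b"
      thus ?thesis using cover[OF ab(2) ab(1) x] e(2) by blast
    next
      assume "d adj x b < d adj x a"
      moreover have "e = {b, a}" using ab by auto
      ultimately show ?thesis using cover[OF symm[OF med ab(2)] _ x] e(2) by blast
    qed
  qed
  ultimately show ?thesis using ab by blast
qed

end

lemma minority_small:
  assumes med: "median_graph V adj" and n_def: "n = card V" and n3: "n \<ge> 3"
    and small: "\<forall>C\<in>theta_classes adj. \<forall>a b. {a, b} \<in> C \<and> adj a b \<longrightarrow>
        real (min (card (comp_del V adj C a)) (card (comp_del V adj C b))) < real n / (2 * ln (real n))"
    and C: "C \<in> theta_classes adj"
  shows "real (card (minority V adj C)) < real n / (2 * ln (real n)) \<and> minority V adj C \<subseteq> V"
proof -
  obtain a b where ab: "{a, b} \<in> C" "adj a b" "V \<subseteq> comp_del V adj C a \<union> comp_del V adj C b"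
    using halves[OF med C] by blast
  have fV: "finite V" using fin[OF med] .
  have sub: "\<And>x. comp_del V adj C x \<subseteq> V" unfolding comp_del_def by blast
  have fc: "\<And>x. finite (comp_del V adj C x)" using sub fV finite_subset by blast
  have "n \<le> card (comp_del V adj C a \<union> comp_del V adj C b)"
    using n_def ab(3) card_mono fc by (metis finite_UnI)
  also have "\<dots> \<le> card (comp_del V adj C a) + card (comp_del V adj C b)" by (rule card_Un_le)
  finally have sum: "n \<le> card (comp_del V adj C a) + card (comp_del V adj C b)" .
  have ln1: "ln (real n) \<ge> 1"
  proof -
    have "exp 1 \<le> real n" using exp_le n3 by linarith
    then have "ln (exp 1) \<le> ln (real n)" using n3 by (subst ln_le_cancel_iff) auto
    thus ?thesis by simp
  qed
  have half: "real n / (2 * ln (real n)) \<le> real n / 2"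
    using ln1 by (intro divide_left_mono) auto
  have mn: "real (min (card (comp_del V adj C a)) (card (comp_del V adj C b))) < real n / 2"
    using small C ab half by fastforce
  have "card (comp_del V adj C a) \<noteq> card (comp_del V adj C b)"
    using mn sum by (auto simp: min_def split: if_splits)
  then have ex: "\<exists>H. \<exists>a b. {a, b} \<in> C \<and> adj a b \<and> H = comp_del V adj C a \<and>
       card H < card (comp_del V adj C b)"
  proof (cases "card (comp_del V adj C a) < card (comp_del V adj C b)")
    case True thus ?thesis using ab by blast
  next
    case False
    then have "card (comp_del V adj C b) < card (comp_del V adj C a)"
      using \<open>card _ \<noteq> card _\<close> by arith
    moreover have "{b, a} \<in> C" "adj b a" using ab symm[OF med] by (auto simp: insert_commute)
    ultimately show ?thesis by blast
  qed
  from someI_ex[OF ex] obtain a' b' where h: "{a', b'} \<in> C" "adj a' b'"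
    "minority V adj C = comp_del V adj C a'" "card (comp_del V adj C a') < card (comp_del V adj C b')"
    unfolding minority_def by force
  have "real (min (card (comp_del V adj C a')) (card (comp_del V adj C b'))) < real n / (2 * ln (real n))"
    using small C h by blast
  then show ?thesis using h sub by (simp add: min_def)
qed

theorem mainTheorem9:
  fixes V :: "'a set" and adj :: "'a \<Rightarrow> 'a \<Rightarrow> bool" and \<omega> :: "'a \<Rightarrow> nat"
    and v0 umax :: 'a and Es :: "'a set set list" and n :: nat
  assumes med: "median_graph V adj"
    and n_def: "n = card V" and n3: "n \<ge> 3"
    and small: "\<forall>C\<in>theta_classes adj. \<forall>a b. {a, b} \<in> C \<and> adj a b \<longrightarrow>
        real (min (card (comp_del V adj C a)) (card (comp_del V adj C b))) < real n / (2 * ln (real n))"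
    and v0V: "v0 \<in> V"
    and v0: "\<forall>C\<in>theta_classes adj. v0 \<in> majority V adj C"
    and umaxV: "umax \<in> V"
    and umax_max: "\<forall>u\<in>V. gdist adj v0 u + \<omega> u \<le> gdist adj v0 umax + \<omega> umax"
    and v0_not_max: "gdist adj v0 v0 + \<omega> v0 < gdist adj v0 umax + \<omega> umax"
    and umax_ne: "umax \<noteq> v0"
    and Es_dist: "distinct Es"
    and Es_set: "set Es = ladder_set V adj v0 umax"
  shows "\<forall>i \<le> length Es.
           real (card (large_set V adj Es i)) \<ge> real n * (1 - real i / (2 * ln (real n)))"
proof (intro allI impI)
  fix i assume "i \<le> length Es"
  then show "real (card (large_set V adj Es i)) \<ge> real n * (1 - real i / (2 * ln (real n)))"
  proof (induction i)
    case 0 thus ?case using n_def by simp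
  next
    case (Suc i)
    have C: "Es ! i \<in> theta_classes adj" using Suc(2) Es_set nth_mem[of i Es]
      unfolding ladder_set_def by auto
    note ms = minority_small[OF med n_def n3 small C]
    have fm: "finite (minority V adj (Es ! i))" using ms fin[OF med] finite_subset by blast
    have "card (large_set V adj Es i) - card (minority V adj (Es ! i)) \<le> card (large_set V adj Es (Suc i))"
      using diff_card_le_card_Diff[OF fm] by simp
    then have "real (card (large_set V adj Es (Suc i))) \<ge> real (card (large_set V adj Es i)) - real (card (minority V adj (Es ! i)))"
      by linarith
    moreover have "real (card (large_set V adj Es i)) \<ge> real n * (1 - real i / (2 * ln (real n)))"
      using Suc by simp
    moreover have "real n * (1 - real (Suc i) / (2 * ln (real n))) = real n * (1 - real i / (2 * ln (real n))) - real n / (2 * ln (real n))"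
      by (simp add: field_simps add_divide_distrib)
    ultimately show ?case using ms by linarith
  qed
qed
end
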